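(* Let $\Phi$ be the standard normal distribution function. For $n\ge 3$ let $\mathcal{R}_n$ be the set of real symmetric positive semi-definite $n\times n$ matrices with unit diagonal, and for $R\in\mathcal{R}_n$ let $R^*$ be the correlation matrix of $(\Phi(X_1),\dots,\Phi(X_n))$, where $(X_1,\dots,X_n)$ is centered Gaussian with covariance $R$. Then the set $\{R^*: R\in\mathcal{R}_n\}$ is a strict subset of $\mathcal{R}_n$. More precisely, with $R_{-1/2}=\begin{pmatrix}1&-1/2&-1/2\\-1/2&1&-1/2\\-1/2&-1/2&1\end{pmatrix}$, there is no centered Gaussian vector $(X,Y,Z)$ with unit variances such that the correlation matrix of $(\Phi(X),\Phi(Y),\Phi(Z))$ is $R_{-1/2}$, and for $n\ge 4$ the block diagonal matrix $\mathrm{diag}(R_{-1/2},I_{n-3})$ belongs to $\mathcal{R}_n$ but is not of the form $R^*$ for any $R\in\mathcal{R}_n$. *)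

theory Defs
  imports "HOL-Probability.Probability"
begin

definition Phi :: "real \<Rightarrow> real" where
  "Phi x = measure (density lborel std_normal_density) {..x}"

text \<open>n x n real matrices are functions nat => nat => real, required to vanish
  outside the index range {0..<n}. The set R_n of correlation matrices:
  symmetric, positive semi-definite, unit diagonal.\<close>
definition corr_matrices :: "nat \<Rightarrow> (nat \<Rightarrow> nat \<Rightarrow> real) set" where
  "corr_matrices n = {R.
     (\<forall>i j. (i \<ge> n \<or> j \<ge> n) \<longrightarrow> R i j = 0) \<and>
     (\<forall>i<n. \<forall>j<n. R i j = R j i) \<and>
     (\<forall>i<n. R i i = 1) \<and>
     (\<forall>x::nat \<Rightarrow> real. 0 \<le> (\<Sum>i<n. \<Sum>j<n. x i * R i j * x j))}"

text \<open>(X_0,...,X_{n-1}) is a centered Gaussian vector with covariance matrix R: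
  each X_i is a real random variable, and every linear combination sum a_i X_i is
  centered normal with variance a^T R a (degenerate = almost surely 0 when the
  variance is 0).\<close>
definition gaussian_vector :: "'a measure \<Rightarrow> nat \<Rightarrow> (nat \<Rightarrow> 'a \<Rightarrow> real) \<Rightarrow> (nat \<Rightarrow> nat \<Rightarrow> real) \<Rightarrow> bool" where
  "gaussian_vector M n X R \<longleftrightarrow>
     (\<forall>i<n. X i \<in> borel_measurable M) \<and>
     (\<forall>a::nat \<Rightarrow> real.
        let v = (\<Sum>i<n. \<Sum>j<n. a i * R i j * a j);
            Y = (\<lambda>\<omega>. \<Sum>i<n. a i * X i \<omega>)
        in if v = 0 then (AE \<omega> in M. Y \<omega> = 0)
           else distributed M lborel Y (normal_density 0 (sqrt v)))"

definition covar :: "'a measure \<Rightarrow> ('a \<Rightarrow> real) \<Rightarrow> ('a \<Rightarrow> real) \<Rightarrow> real" where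
  "covar M U V = (\<integral>\<omega>. (U \<omega> - (\<integral>\<omega>'. U \<omega>' \<partial>M)) * (V \<omega> - (\<integral>\<omega>'. V \<omega>' \<partial>M)) \<partial>M)"

definition correl :: "'a measure \<Rightarrow> ('a \<Rightarrow> real) \<Rightarrow> ('a \<Rightarrow> real) \<Rightarrow> real" where
  "correl M U V = covar M U V / sqrt (covar M U U * covar M V V)"

definition correl_matrix :: "'a measure \<Rightarrow> nat \<Rightarrow> (nat \<Rightarrow> 'a \<Rightarrow> real) \<Rightarrow> (nat \<Rightarrow> nat \<Rightarrow> real)" where
  "correl_matrix M n U = (\<lambda>i j. if i < n \<and> j < n then correl M (U i) (U j) else 0)"

text \<open>The set {R^* : R in R_n}, where R^* is the correlation matrix of
  (Phi(X_1),...,Phi(X_n)) for a centered Gaussian X with covariance R, realised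
  on some probability space whose sample space has type 'a.\<close>
definition Rstar_set :: "'a itself \<Rightarrow> nat \<Rightarrow> (nat \<Rightarrow> nat \<Rightarrow> real) set" where
  "Rstar_set (_ :: 'a itself) n = {S. \<exists>(M :: 'a measure) X R.
      prob_space M \<and> R \<in> corr_matrices n \<and> gaussian_vector M n X R \<and>
      S = correl_matrix M n (\<lambda>i \<omega>. Phi (X i \<omega>))}"

definition block_matrix :: "nat \<Rightarrow> nat \<Rightarrow> nat \<Rightarrow> real" where
  "block_matrix n = (\<lambda>i j. if i < n \<and> j < n then
       (if i = j then 1 else if i < 3 \<and> j < 3 then - 1/2 else 0) else 0)"

end

theory Submission
  imports Defs
begin

lemma Phi_cdf: "Phi = cdf std_normal_distribution"
  by (rule ext) (simp add: Phi_def cdf_def)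

interpretation N: real_distribution std_normal_distribution
  by (rule real_dist_normal_dist)

lemma Phi_mono: "x \<le> y \<Longrightarrow> Phi x \<le> Phi y"
  unfolding Phi_cdf by (rule N.cdf_nondecreasing)

lemma Phi_nonneg: "0 \<le> Phi x"
  unfolding Phi_cdf by (rule N.cdf_nonneg)

lemma Phi_le1: "Phi x \<le> 1"
  unfolding Phi_cdf by (rule N.cdf_bounded_prob)

lemma Phi_measurable[measurable]: "Phi \<in> borel_measurable borel"
  by (rule borel_measurable_mono) (auto simp: mono_def Phi_mono)

lemma Phi_at_top: "(Phi \<longlongrightarrow> 1) at_top"
  unfolding Phi_cdf by (rule N.cdf_lim_at_top_prob)

lemma Phi_at_bot: "(Phi \<longlongrightarrow> 0) at_bot"
  unfolding Phi_cdf by (rule N.cdf_lim_at_bot)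

lemma char_unique_density:
  fixes M :: "'a measure" and h V :: "'a \<Rightarrow> real"
  assumes M: "prob_space M"
    and hm[measurable]: "h \<in> borel_measurable M" and hpos: "\<And>\<omega>. \<omega> \<in> space M \<Longrightarrow> 0 \<le> h \<omega>"
    and hint: "integrable M h" and h1: "(\<integral>\<omega>. h \<omega> \<partial>M) = 1"
    and Vm[measurable]: "V \<in> borel_measurable M"
    and ch: "\<And>t. (CLINT \<omega>|M. h \<omega> *\<^sub>R iexp (t * V \<omega>)) = complex_of_real (exp (- (t^2) / 2))"
    and A: "A \<in> sets borel"
  shows "(\<integral>\<omega>. h \<omega> * indicator A (V \<omega>) \<partial>M) = measure std_normal_distribution A"
proof -
  interpret M: prob_space M by fact
  note A[measurable]
  let ?D = "density M h"
  let ?Q = "distr ?D borel V"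
  have "emeasure ?D (space ?D) = (\<integral>\<^sup>+\<omega>. h \<omega> \<partial>M)"
    by (subst emeasure_density) (auto intro!: nn_integral_cong)
  also have "\<dots> = ennreal (\<integral>\<omega>. h \<omega> \<partial>M)"
    using hint hpos by (intro nn_integral_eq_integral) (auto intro: AE_I2)
  finally have "emeasure ?D (space ?D) = 1" using h1 by simp
  then have pD: "prob_space ?D" by (rule prob_spaceI)
  then have pQ: "prob_space ?Q" by (intro prob_space.prob_space_distr) auto
  have rQ: "real_distribution ?Q"
    using pQ by (simp add: real_distribution_def real_distribution_axioms_def)
  have "char ?Q = char std_normal_distribution"
  proof
    fix t
    have "char ?Q t = (CLINT \<omega>|?D. iexp (t * V \<omega>))"
      unfolding char_def by (subst integral_distr) auto
    also have "\<dots> = (CLINT \<omega>|M. h \<omega> *\<^sub>R iexp (t * V \<omega>))"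
      using hpos by (subst integral_density) auto
    finally show "char ?Q t = char std_normal_distribution t"
      using ch by (simp add: char_std_normal_distribution)
  qed
  then have QN: "?Q = std_normal_distribution"
    using rQ real_dist_normal_dist by (intro Levy_uniqueness) auto
  have "(\<integral>\<omega>. h \<omega> * indicator A (V \<omega>) \<partial>M) = (\<integral>\<omega>. indicator A (V \<omega>) \<partial>?D)"
    using hpos by (subst integral_density) auto
  also have "\<dots> = (\<integral>x. indicator A x \<partial>?Q)"
    using A by (subst integral_distr) auto
  also have "\<dots> = measure std_normal_distribution A"
    unfolding QN using A by simp
  finally show ?thesis .
qed

lemma iexp_cos_identity:
  "iexp (s*x) * complex_of_real (cos (t*w - \<theta>)) =
     (iexp (-\<theta>) * iexp (s*x + t*w) + iexp \<theta> * iexp (s*x + (-t)*w)) / 2"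
proof -
  have "complex_of_real (cos (t*w - \<theta>)) = cos (complex_of_real (t*w - \<theta>))"
    by (rule cos_of_real[symmetric])
  also have "\<dots> = (iexp (t*w - \<theta>) + iexp (-(t*w - \<theta>))) / 2"
    by (simp add: cos_exp_eq algebra_simps)
  finally have c: "complex_of_real (cos (t*w - \<theta>)) = (iexp (t*w - \<theta>) + iexp (-(t*w - \<theta>))) / 2" .
  have h1: "iexp (s*x) * iexp (t*w - \<theta>) = iexp (-\<theta>) * iexp (s*x + t*w)"
    unfolding mult_exp_exp by (simp add: algebra_simps)
  have h2: "iexp (s*x) * iexp (-(t*w - \<theta>)) = iexp \<theta> * iexp (s*x + (-t)*w)"
    unfolding mult_exp_exp by (simp add: algebra_simps)
  show ?thesis unfolding c using h1 h2 by (simp add: distrib_left add_divide_distrib)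
qed

lemma char_lin:
  fixes M :: "'a measure" and X W :: "'a \<Rightarrow> real"
  assumes M: "prob_space M"
    and H: "\<And>a b. a \<noteq> 0 \<or> b \<noteq> 0 \<Longrightarrow>
       distributed M lborel (\<lambda>\<omega>. a * X \<omega> + b * W \<omega>) (normal_density 0 (sqrt (a\<^sup>2 + b\<^sup>2)))"
  shows "(CLINT \<omega>|M. iexp (a * X \<omega> + b * W \<omega>)) = complex_of_real (exp (-(a\<^sup>2 + b\<^sup>2)/2))"
proof (cases "a = 0 \<and> b = 0")
  case True
  interpret M: prob_space M by fact
  show ?thesis using True by (simp add: M.prob_space)
next
  case False
  interpret M: prob_space M by fact
  define \<sigma> where "\<sigma> = sqrt (a\<^sup>2 + b\<^sup>2)"
  have "a\<^sup>2 + b\<^sup>2 > 0" using False by (auto simp: sum_power2_gt_zero_iff)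
  then have \<sigma>pos: "\<sigma> > 0" unfolding \<sigma>_def by simp
  have \<sigma>sq: "\<sigma>\<^sup>2 = a\<^sup>2 + b\<^sup>2" unfolding \<sigma>_def
    using \<open>a\<^sup>2 + b\<^sup>2 > 0\<close> by simp
  let ?L = "\<lambda>\<omega>. a * X \<omega> + b * W \<omega>"
  have "distributed M lborel ?L (normal_density 0 \<sigma>)"
    using H False unfolding \<sigma>_def by auto
  then have "distributed M lborel (\<lambda>\<omega>. (?L \<omega> - 0) / \<sigma>) std_normal_density"
    using M.normal_standard_normal_convert[OF \<sigma>pos] by simp
  then have D: "distributed M lborel (\<lambda>\<omega>. ?L \<omega> / \<sigma>) std_normal_density" by simp
  have Zm[measurable]: "(\<lambda>\<omega>. ?L \<omega> / \<sigma>) \<in> measurable M lborel"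
    using D by (rule distributed_measurable)
  then have Zb[measurable]: "(\<lambda>\<omega>. ?L \<omega> / \<sigma>) \<in> borel_measurable M" by simp
  have dZ: "distr M lborel (\<lambda>\<omega>. ?L \<omega> / \<sigma>) = std_normal_distribution"
    using D by (rule distributed_distr_eq_density)
  have "(CLINT \<omega>|M. iexp (?L \<omega>)) = (CLINT \<omega>|M. iexp (\<sigma> * (?L \<omega> / \<sigma>)))"
    using \<sigma>pos by simp
  also have "\<dots> = (CLINT x|distr M lborel (\<lambda>\<omega>. ?L \<omega> / \<sigma>). iexp (\<sigma> * x))"
    by (subst integral_distr) auto
  also have "\<dots> = char std_normal_distribution \<sigma>"
    unfolding dZ char_def ..
  also have "\<dots> = exp (-(a\<^sup>2 + b\<^sup>2)/2)"
    by (auto simp add: char_std_normal_distribution \<sigma>sq algebra_simps)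
  finally show ?thesis .
qed

lemma cos_indep:
  fixes M :: "'a measure" and X W :: "'a \<Rightarrow> real"
  assumes M: "prob_space M"
    and Xm[measurable]: "X \<in> borel_measurable M" and Wm[measurable]: "W \<in> borel_measurable M"
    and H: "\<And>a b. a \<noteq> 0 \<or> b \<noteq> 0 \<Longrightarrow>
       distributed M lborel (\<lambda>\<omega>. a * X \<omega> + b * W \<omega>) (normal_density 0 (sqrt (a\<^sup>2 + b\<^sup>2)))"
    and A[measurable]: "A \<in> sets borel"
  shows "(\<integral>\<omega>. indicator A (X \<omega>) * cos (t * W \<omega> - \<theta>) \<partial>M) =
           measure std_normal_distribution A * exp (-(t\<^sup>2)/2) * cos \<theta>"
proof -
  interpret M: prob_space M by fact
  have hX: "distributed M lborel X std_normal_density"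
    using H[of 1 0] by simp
  then have dX: "distr M lborel X = std_normal_distribution"
    by (rule distributed_distr_eq_density)
  have PX: "(\<integral>\<omega>. indicator A (X \<omega>) \<partial>M) = measure std_normal_distribution A"
  proof -
    have "(\<integral>\<omega>. indicator A (X \<omega>) \<partial>M) = (\<integral>x. indicator A x \<partial>distr M lborel X :: real)"
      by (rule integral_distr[of X M lborel "indicator A", symmetric]) auto
    then show ?thesis unfolding dX by simp
  qed
  have CL: "\<And>a b. (CLINT \<omega>|M. iexp (a * X \<omega> + b * W \<omega>)) = complex_of_real (exp (-(a\<^sup>2 + b\<^sup>2)/2))"
    by (rule char_lin[OF M H]) auto
  have intexp: "\<And>a b. integrable M (\<lambda>\<omega>. iexp (a * X \<omega> + b * W \<omega>))"
    by (rule M.integrable_const_bound[where B=1]) (auto simp: norm_exp_i_times)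
  have E2: "\<And>s. (CLINT \<omega>|M. iexp (s * X \<omega>) * complex_of_real (cos (t * W \<omega> - \<theta>))) =
      complex_of_real (exp (-(s\<^sup>2+t\<^sup>2)/2) * cos \<theta>)"
  proof -
    fix s
    have e1: "(CLINT \<omega>|M. iexp (s * X \<omega>) * complex_of_real (cos (t * W \<omega> - \<theta>))) =
      (CLINT \<omega>|M. iexp (-\<theta>) * iexp (s * X \<omega> + t * W \<omega>) + iexp \<theta> * iexp (s * X \<omega> + (-t) * W \<omega>)) / 2"
      by (simp only: iexp_cos_identity integral_divide_zero)
    have e2: "(CLINT \<omega>|M. iexp (-\<theta>) * iexp (s * X \<omega> + t * W \<omega>) + iexp \<theta> * iexp (s * X \<omega> + (-t) * W \<omega>)) =
        (CLINT \<omega>|M. iexp (-\<theta>) * iexp (s * X \<omega> + t * W \<omega>)) + (CLINT \<omega>|M. iexp \<theta> * iexp (s * X \<omega> + (-t) * W \<omega>))"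
      by (rule Bochner_Integration.integral_add[OF integrable_mult_right[OF intexp[of s t]] integrable_mult_right[OF intexp[of s "-t"]]])
    have e3: "(CLINT \<omega>|M. iexp (-\<theta>) * iexp (s * X \<omega> + t * W \<omega>)) = iexp (-\<theta>) * complex_of_real (exp (-(s\<^sup>2+t\<^sup>2)/2))"
      by (simp only: integral_mult_right_zero CL)
    have e4: "(CLINT \<omega>|M. iexp \<theta> * iexp (s * X \<omega> + (-t) * W \<omega>)) = iexp \<theta> * complex_of_real (exp (-(s\<^sup>2+t\<^sup>2)/2))"
      by (simp only: integral_mult_right_zero CL power2_minus)
    have e5: "(iexp (-\<theta>) + iexp \<theta>) / 2 = complex_of_real (cos \<theta>)"
      by (simp add: cos_exp_eq cos_of_real[symmetric] algebra_simps)
    have "(CLINT \<omega>|M. iexp (s * X \<omega>) * complex_of_real (cos (t * W \<omega> - \<theta>))) =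
       ((iexp (-\<theta>) + iexp \<theta>) / 2) * complex_of_real (exp (-(s\<^sup>2+t\<^sup>2)/2))"
      unfolding e1 e2 e3 e4 by (simp add: algebra_simps add_divide_distrib)
    then show "?thesis s" unfolding e5 by simp
  qed
  have Ecos: "(\<integral>\<omega>. cos (t * W \<omega> - \<theta>) \<partial>M) = exp (-(t\<^sup>2)/2) * cos \<theta>"
    using E2[of 0] by (simp del: of_real_mult add: of_real_mult[symmetric])
  define k where "k = 2 + exp (-(t\<^sup>2)/2) * cos \<theta>"
  have "exp (-(t\<^sup>2)/2) * cos \<theta> \<ge> -1"
  proof -
    have "exp (-(t\<^sup>2)/2) \<le> 1" by simp
    moreover have "\<bar>cos \<theta>\<bar> \<le> 1" by simp
    ultimately have "\<bar>exp (-(t\<^sup>2)/2) * cos \<theta>\<bar> \<le> 1"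
      by (simp add: abs_mult mult_le_one)
    then show ?thesis by linarith
  qed
  then have kpos: "k \<ge> 1" unfolding k_def by linarith
  define h where "h = (\<lambda>\<omega>. (2 + cos (t * W \<omega> - \<theta>)) / k)"
  have hm[measurable]: "h \<in> borel_measurable M" unfolding h_def by measurable
  have hpos: "\<And>\<omega>. 0 \<le> h \<omega>" unfolding h_def using kpos
    by (intro divide_nonneg_nonneg) (auto intro: add_nonneg_nonneg simp: cos_ge_minus_one, smt (verit) cos_ge_minus_one)
  have intcos: "integrable M (\<lambda>\<omega>. cos (t * W \<omega> - \<theta>))"
    by (rule M.integrable_const_bound[where B=1]) auto
  have hint: "integrable M h" unfolding h_def using intcos by auto
  have h1: "(\<integral>\<omega>. h \<omega> \<partial>M) = 1"
    unfolding h_def using intcos kpos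
    by (simp add: Ecos integral_divide_zero M.prob_space k_def)
  have ch: "\<And>s. (CLINT \<omega>|M. h \<omega> *\<^sub>R iexp (s * X \<omega>)) = complex_of_real (exp (- (s^2) / 2))"
  proof -
    fix s
    have int1: "integrable M (\<lambda>\<omega>. iexp (s * X \<omega>))"
      using intexp[of s 0] by simp
    have int2: "integrable M (\<lambda>\<omega>. iexp (s * X \<omega>) * complex_of_real (cos (t * W \<omega> - \<theta>)))"
      by (rule M.integrable_const_bound[where B=1])
         (auto simp: norm_mult norm_exp_i_times)
    have "(CLINT \<omega>|M. h \<omega> *\<^sub>R iexp (s * X \<omega>)) =
       (CLINT \<omega>|M. (2 * iexp (s * X \<omega>) + iexp (s * X \<omega>) * complex_of_real (cos (t * W \<omega> - \<theta>))) / complex_of_real k)"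
      unfolding h_def by (simp add: scaleR_conv_of_real algebra_simps add_divide_distrib)
    also have "\<dots> = (2 * (CLINT \<omega>|M. iexp (s * X \<omega>)) + complex_of_real (exp (-(s\<^sup>2+t\<^sup>2)/2) * cos \<theta>)) / complex_of_real k"
      using int1 int2 E2[of s] by (simp add: integral_divide_zero Bochner_Integration.integral_add)
    also have "(CLINT \<omega>|M. iexp (s * X \<omega>)) = complex_of_real (exp (-(s\<^sup>2)/2))"
      using CL[of s 0] by simp
    also have "exp (-(s\<^sup>2+t\<^sup>2)/2) = exp (-(s\<^sup>2)/2) * exp (-(t\<^sup>2)/2)"
      by (simp add: exp_add[symmetric] add_divide_distrib)
    finally have F: "(CLINT \<omega>|M. h \<omega> *\<^sub>R iexp (s * X \<omega>)) =
       (2 * complex_of_real (exp (-(s\<^sup>2)/2)) + complex_of_real (exp (-(s\<^sup>2)/2) * exp (-(t\<^sup>2)/2) * cos \<theta>)) / complex_of_real k" .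
    have G: "2 * exp (-(s\<^sup>2)/2) + exp (-(s\<^sup>2)/2) * exp (-(t\<^sup>2)/2) * cos \<theta> = exp (-(s\<^sup>2)/2) * k"
      by (simp add: k_def algebra_simps)
    have "(2 * complex_of_real (exp (-(s\<^sup>2)/2)) + complex_of_real (exp (-(s\<^sup>2)/2) * exp (-(t\<^sup>2)/2) * cos \<theta>)) / complex_of_real k
       = complex_of_real ((2 * exp (-(s\<^sup>2)/2) + exp (-(s\<^sup>2)/2) * exp (-(t\<^sup>2)/2) * cos \<theta>) / k)"
      by simp
    also have "\<dots> = complex_of_real (exp (-(s\<^sup>2)/2))"
      unfolding G using kpos by simp
    finally show "?thesis s" using F by simp
  qed
  have main: "(\<integral>\<omega>. h \<omega> * indicator A (X \<omega>) \<partial>M) = measure std_normal_distribution A"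
    by (rule char_unique_density[OF M hm hpos hint h1 Xm ch A])
  have intind: "integrable M (\<lambda>\<omega>. indicator A (X \<omega>) * cos (t * W \<omega> - \<theta>) :: real)"
    by (rule M.integrable_const_bound[where B=1]) (auto simp: indicator_def)
  have intind0: "integrable M (\<lambda>\<omega>. indicator A (X \<omega>) :: real)"
    by (rule M.integrable_const_bound[where B=1]) (auto simp: indicator_def)
  have "(\<integral>\<omega>. h \<omega> * indicator A (X \<omega>) \<partial>M) =
     (2 * (\<integral>\<omega>. indicator A (X \<omega>) \<partial>M) + (\<integral>\<omega>. indicator A (X \<omega>) * cos (t * W \<omega> - \<theta>) \<partial>M)) / k"
    unfolding h_def using intind intind0
    by (simp add: algebra_simps add_divide_distrib integral_divide_zero)
  with main PX kpos show ?thesis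
    by (simp add: k_def field_simps)
qed

lemma iexp_cos_sin: "iexp x = complex_of_real (cos x) + \<i> * complex_of_real (sin x)"
  by (simp add: cis_conv_exp[symmetric] complex_eq_iff)

lemma rect_indep:
  fixes M :: "'a measure" and X W :: "'a \<Rightarrow> real"
  assumes M: "prob_space M"
    and Xm[measurable]: "X \<in> borel_measurable M" and Wm[measurable]: "W \<in> borel_measurable M"
    and H: "\<And>a b. a \<noteq> 0 \<or> b \<noteq> 0 \<Longrightarrow>
       distributed M lborel (\<lambda>\<omega>. a * X \<omega> + b * W \<omega>) (normal_density 0 (sqrt (a\<^sup>2 + b\<^sup>2)))"
    and A[measurable]: "A \<in> sets borel" and B[measurable]: "B \<in> sets borel"
  shows "(\<integral>\<omega>. indicator A (X \<omega>) * indicator B (W \<omega>) \<partial>M) =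
           measure std_normal_distribution A * measure std_normal_distribution B"
proof -
  interpret M: prob_space M by fact
  have hX: "distributed M lborel X std_normal_density"
    using H[of 1 0] by simp
  then have dX: "distr M lborel X = std_normal_distribution"
    by (rule distributed_distr_eq_density)
  have PX: "(\<integral>\<omega>. indicator A (X \<omega>) \<partial>M) = measure std_normal_distribution A"
  proof -
    have "(\<integral>\<omega>. indicator A (X \<omega>) \<partial>M) = (\<integral>x. indicator A x \<partial>distr M lborel X :: real)"
      by (rule integral_distr[of X M lborel "indicator A", symmetric]) auto
    then show ?thesis unfolding dX by simp
  qed
  have intA: "integrable M (\<lambda>\<omega>. indicator A (X \<omega>) :: real)"
    by (rule M.integrable_const_bound[where B=1]) (auto simp: indicator_def)
  have intAB: "integrable M (\<lambda>\<omega>. indicator A (X \<omega>) * indicator B (W \<omega>) :: real)"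
    by (rule M.integrable_const_bound[where B=1]) (auto simp: indicator_def)
  define p where "p = measure std_normal_distribution A"
  show ?thesis
  proof (cases "p = 0")
    case True
    have "(\<integral>\<omega>. indicator A (X \<omega>) * indicator B (W \<omega>) \<partial>M) \<le> (\<integral>\<omega>. indicator A (X \<omega>) \<partial>M :: real)"
      using intA intAB by (intro Bochner_Integration.integral_mono) (auto simp: indicator_def)
    moreover have "0 \<le> (\<integral>\<omega>. indicator A (X \<omega>) * indicator B (W \<omega>) \<partial>M :: real)"
      by (intro Bochner_Integration.integral_nonneg) auto
    ultimately show ?thesis using True PX unfolding p_def by simp
  next
    case False
    then have ppos: "p > 0" unfolding p_def using measure_nonneg[of std_normal_distribution A]
      by linarith
    define h where "h = (\<lambda>\<omega>. indicator A (X \<omega>) / p :: real)"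
    have hm[measurable]: "h \<in> borel_measurable M" unfolding h_def by measurable
    have hpos: "\<And>\<omega>. 0 \<le> h \<omega>" unfolding h_def using ppos by simp
    have hint: "integrable M h" unfolding h_def using intA by simp
    have h1: "(\<integral>\<omega>. h \<omega> \<partial>M) = 1" unfolding h_def using PX ppos
      by (simp add: integral_divide_zero p_def)
    have ch: "\<And>t. (CLINT \<omega>|M. h \<omega> *\<^sub>R iexp (t * W \<omega>)) = complex_of_real (exp (- (t^2) / 2))"
    proof -
      fix t
      have ic: "integrable M (\<lambda>\<omega>. h \<omega> * cos (t * W \<omega>))"
        by (rule M.integrable_const_bound[where B="1/p"]) (use ppos in \<open>auto intro!: AE_I2 divide_right_mono simp: h_def indicator_def abs_mult\<close>)
      have isn: "integrable M (\<lambda>\<omega>. h \<omega> * sin (t * W \<omega>))"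
        by (rule M.integrable_const_bound[where B="1/p"]) (use ppos in \<open>auto intro!: AE_I2 divide_right_mono simp: h_def indicator_def abs_mult\<close>)
      have pw: "\<And>\<omega>. h \<omega> *\<^sub>R iexp (t * W \<omega>) =
          complex_of_real (h \<omega> * cos (t * W \<omega>)) + \<i> * complex_of_real (h \<omega> * sin (t * W \<omega>))"
        by (subst iexp_cos_sin) (simp add: scaleR_conv_of_real algebra_simps)
      have "(CLINT \<omega>|M. h \<omega> *\<^sub>R iexp (t * W \<omega>)) =
          (CLINT \<omega>|M. complex_of_real (h \<omega> * cos (t * W \<omega>)) + \<i> * complex_of_real (h \<omega> * sin (t * W \<omega>)))"
        by (simp only: pw)
      also have "\<dots> = complex_of_real (\<integral>\<omega>. h \<omega> * cos (t * W \<omega>) \<partial>M) +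
             \<i> * complex_of_real (\<integral>\<omega>. h \<omega> * sin (t * W \<omega>) \<partial>M)"
      proof -
        have i1: "integrable M (\<lambda>\<omega>. complex_of_real (h \<omega> * cos (t * W \<omega>)))"
          using ic by (rule integrable_of_real)
        have i2: "integrable M (\<lambda>\<omega>. \<i> * complex_of_real (h \<omega> * sin (t * W \<omega>)))"
          using isn by (intro integrable_mult_right integrable_of_real)
        show ?thesis
          by (simp only: Bochner_Integration.integral_add[OF i1 i2] integral_mult_right_zero integral_complex_of_real)
      qed
      also have "(\<integral>\<omega>. h \<omega> * cos (t * W \<omega>) \<partial>M) = (\<integral>\<omega>. indicator A (X \<omega>) * cos (t * W \<omega> - 0) \<partial>M) / p"
        unfolding h_def by (simp add: integral_divide_zero)
      also have "\<dots> = exp (-(t\<^sup>2)/2)"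
        using cos_indep[OF M Xm Wm H A, of t 0] ppos unfolding p_def by simp
      also have "(\<integral>\<omega>. h \<omega> * sin (t * W \<omega>) \<partial>M) = (\<integral>\<omega>. indicator A (X \<omega>) * cos (t * W \<omega> - pi/2) \<partial>M) / p"
        unfolding h_def by (simp add: integral_divide_zero cos_diff)
      also have "\<dots> = 0"
        using cos_indep[OF M Xm Wm H A, of t "pi/2"] by simp
      finally show "?thesis t" by simp
    qed
    have "(\<integral>\<omega>. h \<omega> * indicator B (W \<omega>) \<partial>M) = measure std_normal_distribution B"
      by (rule char_unique_density[OF M hm hpos hint h1 Wm ch B])
    then show ?thesis unfolding h_def using ppos
      by (simp add: integral_divide_zero p_def field_simps)
  qed
qed

lemma pair_indep:
  fixes M :: "'a measure" and X W :: "'a \<Rightarrow> real"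
  assumes M: "prob_space M"
    and Xm[measurable]: "X \<in> borel_measurable M" and Wm[measurable]: "W \<in> borel_measurable M"
    and H: "\<And>a b. a \<noteq> 0 \<or> b \<noteq> 0 \<Longrightarrow>
       distributed M lborel (\<lambda>\<omega>. a * X \<omega> + b * W \<omega>) (normal_density 0 (sqrt (a\<^sup>2 + b\<^sup>2)))"
  shows "std_normal_distribution \<Otimes>\<^sub>M std_normal_distribution =
          distr M (borel \<Otimes>\<^sub>M borel) (\<lambda>\<omega>. (X \<omega>, W \<omega>))"
proof (rule pair_measure_eqI)
  interpret M: prob_space M by fact
  show "sigma_finite_measure std_normal_distribution"
    by (simp add: N.sigma_finite_measure_axioms)
  show "sigma_finite_measure std_normal_distribution"
    by (simp add: N.sigma_finite_measure_axioms)
  show "sets (std_normal_distribution \<Otimes>\<^sub>M std_normal_distribution) =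
      sets (distr M (borel \<Otimes>\<^sub>M borel) (\<lambda>\<omega>. (X \<omega>, W \<omega>)))"
    by (simp cong: sets_pair_measure_cong)
  fix A B assume "A \<in> sets std_normal_distribution" "B \<in> sets std_normal_distribution"
  then have A[measurable]: "A \<in> sets borel" and B[measurable]: "B \<in> sets borel" by auto
  have "emeasure (distr M (borel \<Otimes>\<^sub>M borel) (\<lambda>\<omega>. (X \<omega>, W \<omega>))) (A \<times> B) =
      emeasure M ((\<lambda>\<omega>. (X \<omega>, W \<omega>)) -` (A \<times> B) \<inter> space M)"
    by (rule emeasure_distr) auto
  also have "\<dots> = ennreal (measure M ((\<lambda>\<omega>. (X \<omega>, W \<omega>)) -` (A \<times> B) \<inter> space M))"
    by (rule M.emeasure_eq_measure)
  also have "measure M ((\<lambda>\<omega>. (X \<omega>, W \<omega>)) -` (A \<times> B) \<inter> space M) =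
      (\<integral>\<omega>. indicator ((\<lambda>\<omega>. (X \<omega>, W \<omega>)) -` (A \<times> B) \<inter> space M) \<omega> \<partial>M)"
    by simp
  also have "\<dots> = (\<integral>\<omega>. indicator A (X \<omega>) * indicator B (W \<omega>) \<partial>M)"
    by (intro Bochner_Integration.integral_cong) (auto simp: indicator_def)
  also have "\<dots> = measure std_normal_distribution A * measure std_normal_distribution B"
    by (rule rect_indep[OF M Xm Wm H A B])
  finally show "emeasure std_normal_distribution A * emeasure std_normal_distribution B =
      emeasure (distr M (borel \<Otimes>\<^sub>M borel) (\<lambda>\<omega>. (X \<omega>, W \<omega>))) (A \<times> B)"
    by (simp add: N.emeasure_eq_measure ennreal_mult'')
qed

lemma pair_integral:
  fixes M :: "'a measure" and X W :: "'a \<Rightarrow> real" and f :: "real \<times> real \<Rightarrow> real"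
  assumes M: "prob_space M"
    and Xm[measurable]: "X \<in> borel_measurable M" and Wm[measurable]: "W \<in> borel_measurable M"
    and H: "\<And>a b. a \<noteq> 0 \<or> b \<noteq> 0 \<Longrightarrow>
       distributed M lborel (\<lambda>\<omega>. a * X \<omega> + b * W \<omega>) (normal_density 0 (sqrt (a\<^sup>2 + b\<^sup>2)))"
    and fm[measurable]: "f \<in> borel_measurable (borel \<Otimes>\<^sub>M borel)"
    and fb: "\<And>z. \<bar>f z\<bar> \<le> C"
  shows "(\<integral>\<omega>. f (X \<omega>, W \<omega>) \<partial>M) =
     (\<integral>x. (\<integral>w. f (x, w) \<partial>std_normal_distribution) \<partial>std_normal_distribution)"
proof -
  interpret P: pair_sigma_finite std_normal_distribution std_normal_distribution
    by (simp add: N.sigma_finite_measure_axioms pair_sigma_finite_def)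
  interpret NN: prob_space "std_normal_distribution \<Otimes>\<^sub>M std_normal_distribution"
    by (simp add: N.prob_space_axioms prob_space_pair)
  have "(\<integral>\<omega>. f (X \<omega>, W \<omega>) \<partial>M) = (\<integral>z. f z \<partial>distr M (borel \<Otimes>\<^sub>M borel) (\<lambda>\<omega>. (X \<omega>, W \<omega>)))"
    by (rule integral_distr[of "\<lambda>\<omega>. (X \<omega>, W \<omega>)" M "borel \<Otimes>\<^sub>M borel" f, symmetric]) auto
  also have "\<dots> = (\<integral>z. f z \<partial>(std_normal_distribution \<Otimes>\<^sub>M std_normal_distribution))"
    by (simp only: pair_indep[OF M Xm Wm H])
  also have "\<dots> = (\<integral>x. (\<integral>w. f (x, w) \<partial>std_normal_distribution) \<partial>std_normal_distribution)"
  proof (rule P.integral_fst'[symmetric])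
    show "integrable (std_normal_distribution \<Otimes>\<^sub>M std_normal_distribution) f"
      by (rule NN.integrable_const_bound[where B=C]) (auto simp: fb)
  qed
  finally show ?thesis .
qed

definition psi :: "real \<Rightarrow> real \<Rightarrow> real" where
  "psi r x = (\<integral>w. Phi (r * x + sqrt (1 - r\<^sup>2) * w) \<partial>std_normal_distribution)"

lemma Phi_abs: "\<bar>Phi x\<bar> \<le> 1"
  using Phi_nonneg[of x] Phi_le1[of x] by simp

lemma N_UNIV: "measure std_normal_distribution UNIV = 1"
  using N.prob_space by simp

lemma integral_std_normal_fun:
  fixes M :: "'a measure" and X :: "'a \<Rightarrow> real" and g :: "real \<Rightarrow> real"
  assumes "distributed M lborel X std_normal_density" and [measurable]: "g \<in> borel_measurable borel"
  shows "(\<integral>\<omega>. g (X \<omega>) \<partial>M) = (\<integral>x. g x \<partial>std_normal_distribution)"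
proof -
  have Xm[measurable]: "X \<in> borel_measurable M"
    using distributed_measurable[OF assms(1)] by simp
  have dX: "distr M lborel X = std_normal_distribution"
    using assms(1) by (rule distributed_distr_eq_density)
  have "(\<integral>\<omega>. g (X \<omega>) \<partial>M) = (\<integral>x. g x \<partial>distr M lborel X)"
    by (rule integral_distr[of X M lborel g, symmetric]) auto
  then show ?thesis unfolding dX .
qed

lemma pair_cond:
  fixes M :: "'a measure" and X Y :: "'a \<Rightarrow> real"
  assumes M: "prob_space M" and r: "r\<^sup>2 \<le> 1"
    and H2: "\<And>a b. (a\<^sup>2 + 2*a*b*r + b\<^sup>2 = 0 \<longrightarrow> (AE \<omega> in M. a * X \<omega> + b * Y \<omega> = 0)) \<and>
       (a\<^sup>2 + 2*a*b*r + b\<^sup>2 \<noteq> 0 \<longrightarrow> distributed M lborel (\<lambda>\<omega>. a * X \<omega> + b * Y \<omega>)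
           (normal_density 0 (sqrt (a\<^sup>2 + 2*a*b*r + b\<^sup>2))))"
    and B[measurable]: "B \<in> sets borel"
  shows "(\<integral>\<omega>. indicator B (X \<omega>) * Phi (Y \<omega>) \<partial>M) =
         (\<integral>x. indicator B x * psi r x \<partial>std_normal_distribution)"
proof -
  interpret M: prob_space M by fact
  have hX: "distributed M lborel X std_normal_density"
    using H2[of 1 0] by simp
  have hY: "distributed M lborel Y std_normal_density"
    using H2[of 0 1] by simp
  have Xm[measurable]: "X \<in> borel_measurable M"
    using distributed_measurable[OF hX] by simp
  have Ym[measurable]: "Y \<in> borel_measurable M"
    using distributed_measurable[OF hY] by simp
  define s where "s = sqrt (1 - r\<^sup>2)"
  show ?thesis
  proof (cases "s = 0")
    case True
    then have r1: "r\<^sup>2 = 1" unfolding s_def using r by simp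
    have "r\<^sup>2 + 2*r*(-1)*r + (-1)\<^sup>2 = 0" using r1 by (simp add: power2_eq_square algebra_simps)
    then have "AE \<omega> in M. r * X \<omega> + (-1) * Y \<omega> = 0"
      using H2[of r "-1"] by blast
    then have ae: "AE \<omega> in M. Y \<omega> = r * X \<omega>" by (auto elim!: AE_mp)
    have "(\<integral>\<omega>. indicator B (X \<omega>) * Phi (Y \<omega>) \<partial>M) = (\<integral>\<omega>. indicator B (X \<omega>) * Phi (r * X \<omega>) \<partial>M)"
      using ae by (intro integral_cong_AE) auto
    also have "\<dots> = (\<integral>x. indicator B x * Phi (r * x) \<partial>std_normal_distribution)"
      by (rule integral_std_normal_fun[OF hX]) measurable
    also have "\<dots> = (\<integral>x. indicator B x * psi r x \<partial>std_normal_distribution)"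
      by (intro Bochner_Integration.integral_cong)
         (auto simp: psi_def True[unfolded s_def] N_UNIV)
    finally show ?thesis .
  next
    case False
    then have spos: "s > 0" unfolding s_def using r by simp
    have s2: "s\<^sup>2 = 1 - r\<^sup>2" unfolding s_def using r by simp
    define W where "W = (\<lambda>\<omega>. (Y \<omega> - r * X \<omega>) / s)"
    have Wm[measurable]: "W \<in> borel_measurable M" unfolding W_def by measurable
    have YW: "\<And>\<omega>. Y \<omega> = r * X \<omega> + s * W \<omega>"
      unfolding W_def using spos by (simp add: field_simps)
    have H: "\<And>a b. a \<noteq> 0 \<or> b \<noteq> 0 \<Longrightarrow>
       distributed M lborel (\<lambda>\<omega>. a * X \<omega> + b * W \<omega>) (normal_density 0 (sqrt (a\<^sup>2 + b\<^sup>2)))"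
    proof -
      fix a b :: real assume ab: "a \<noteq> 0 \<or> b \<noteq> 0"
      define a' where "a' = a - b * r / s"
      define b' where "b' = b / s"
      have v: "a'\<^sup>2 + 2*a'*b'*r + b'\<^sup>2 = a\<^sup>2 + b\<^sup>2"
      proof -
        have "a'\<^sup>2 + 2*a'*b'*r + b'\<^sup>2 = a\<^sup>2 + b\<^sup>2 * (1 - r\<^sup>2) / s\<^sup>2"
          unfolding a'_def b'_def using spos by (simp add: field_simps power2_eq_square)
        also have "\<dots> = a\<^sup>2 + b\<^sup>2" using s2 spos by (simp add: s2[symmetric])
        finally show ?thesis .
      qed
      have "a\<^sup>2 + b\<^sup>2 \<noteq> 0" using ab by (simp add: sum_power2_eq_zero_iff)
      then have "distributed M lborel (\<lambda>\<omega>. a' * X \<omega> + b' * Y \<omega>) (normal_density 0 (sqrt (a\<^sup>2 + b\<^sup>2)))"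
        using H2[of a' b'] unfolding v by simp
      moreover have "(\<lambda>\<omega>. a' * X \<omega> + b' * Y \<omega>) = (\<lambda>\<omega>. a * X \<omega> + b * W \<omega>)"
        unfolding a'_def b'_def W_def using spos by (auto simp: field_simps)
      ultimately show "distributed M lborel (\<lambda>\<omega>. a * X \<omega> + b * W \<omega>) (normal_density 0 (sqrt (a\<^sup>2 + b\<^sup>2)))"
        by simp
    qed
    have "(\<integral>\<omega>. indicator B (X \<omega>) * Phi (Y \<omega>) \<partial>M) =
        (\<integral>\<omega>. (\<lambda>(x,w). indicator B x * Phi (r * x + s * w)) (X \<omega>, W \<omega>) \<partial>M)"
      by (simp add: YW)
    also have "\<dots> = (\<integral>x. (\<integral>w. (\<lambda>(x,w). indicator B x * Phi (r * x + s * w)) (x, w) \<partial>std_normal_distribution) \<partial>std_normal_distribution)"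
      by (rule pair_integral[OF M Xm Wm H, where C=1])
         (auto simp: indicator_def Phi_abs)
    also have "\<dots> = (\<integral>x. indicator B x * psi r x \<partial>std_normal_distribution)"
      by (simp add: psi_def s_def integral_mult_right_zero)
    finally show ?thesis .
  qed
qed

lemma psi_neg: "psi r x = psi (-r) (-x)" by (simp add: psi_def)
lemma psi_zero: "psi 0 x = psi 0 0" by (simp add: psi_def)

lemma psi_limit_gen:
  assumes lim: "\<And>w. (\<lambda>n. Phi (r * x n + sqrt (1 - r\<^sup>2) * w)) \<longlonglongrightarrow> c"
  shows "(\<lambda>n. psi r (x n)) \<longlonglongrightarrow> c"
proof -
  have "(\<lambda>n. \<integral>w. Phi (r * x n + sqrt (1 - r\<^sup>2) * w) \<partial>std_normal_distribution) \<longlonglongrightarrow>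
      (\<integral>w. c \<partial>std_normal_distribution)"
    by (rule integral_dominated_convergence[where w="\<lambda>_. 1"])
       (auto simp: lim Phi_abs)
  then show ?thesis unfolding psi_def by (simp add: N_UNIV)
qed

lemma psi_top_pos:
  assumes r: "r > 0" and x: "filterlim x at_top sequentially"
  shows "(\<lambda>n. psi r (x n)) \<longlonglongrightarrow> 1"
proof (rule psi_limit_gen)
  fix w
  have "filterlim (\<lambda>n. r * x n) at_top sequentially"
    by (rule filterlim_tendsto_pos_mult_at_top[OF tendsto_const r x])
  then have "filterlim (\<lambda>n. sqrt (1 - r\<^sup>2) * w + r * x n) at_top sequentially"
    by (rule filterlim_tendsto_add_at_top[OF tendsto_const])
  then have "filterlim (\<lambda>n. r * x n + sqrt (1 - r\<^sup>2) * w) at_top sequentially"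
    by (simp add: add.commute)
  then show "(\<lambda>n. Phi (r * x n + sqrt (1 - r\<^sup>2) * w)) \<longlonglongrightarrow> 1"
    by (rule filterlim_compose[OF Phi_at_top])
qed

lemma psi_top_neg:
  assumes r: "r < 0" and x: "filterlim x at_top sequentially"
  shows "(\<lambda>n. psi r (x n)) \<longlonglongrightarrow> 0"
proof (rule psi_limit_gen)
  fix w
  have "filterlim (\<lambda>n. (-r) * x n) at_top sequentially"
    using r by (intro filterlim_tendsto_pos_mult_at_top[OF tendsto_const _ x]) simp
  then have "filterlim (\<lambda>n. - (sqrt (1 - r\<^sup>2) * w) + (-r) * x n) at_top sequentially"
    by (rule filterlim_tendsto_add_at_top[OF tendsto_const])
  then have "filterlim (\<lambda>n. - (r * x n + sqrt (1 - r\<^sup>2) * w)) at_top sequentially"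
    by (simp add: algebra_simps)
  then have "filterlim (\<lambda>n. r * x n + sqrt (1 - r\<^sup>2) * w) at_bot sequentially"
    by (simp add: filterlim_uminus_at_bot)
  then show "(\<lambda>n. Phi (r * x n + sqrt (1 - r\<^sup>2) * w)) \<longlonglongrightarrow> 0"
    by (rule filterlim_compose[OF Phi_at_bot])
qed

definition Lp :: "real \<Rightarrow> real" where
  "Lp r = (if r > 0 then 1 else if r < 0 then 0 else psi 0 0)"
definition Lm :: "real \<Rightarrow> real" where
  "Lm r = (if r > 0 then 0 else if r < 0 then 1 else psi 0 0)"

lemma psi_top:
  assumes x: "filterlim x at_top sequentially"
  shows "(\<lambda>n. psi r (x n)) \<longlonglongrightarrow> Lp r"
proof -
  consider "r > 0" | "r < 0" | "r = 0" by linarith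
  then show ?thesis
  proof cases
    case 1 then show ?thesis using psi_top_pos[OF _ x] by (simp add: Lp_def)
  next
    case 2 then show ?thesis using psi_top_neg[OF _ x] by (simp add: Lp_def)
  next
    case 3 then show ?thesis by (simp add: Lp_def psi_zero[of "x _"])
  qed
qed

lemma psi_bot:
  assumes x: "filterlim x at_bot sequentially"
  shows "(\<lambda>n. psi r (x n)) \<longlonglongrightarrow> Lm r"
proof -
  have x': "filterlim (\<lambda>n. - x n) at_top sequentially"
    using x by (simp add: filterlim_uminus_at_bot)
  have "(\<lambda>n. psi (-r) (- x n)) \<longlonglongrightarrow> Lp (-r)"
    by (rule psi_top[OF x'])
  moreover have "Lp (-r) = Lm r" by (simp add: Lp_def Lm_def)
  ultimately show ?thesis by (subst psi_neg) simp
qed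

lemma psi_measurable[measurable]: "psi r \<in> borel_measurable borel"
  unfolding psi_def[abs_def] by measurable

lemma psi_abs: "\<bar>psi r x\<bar> \<le> 1"
proof -
  have "\<bar>psi r x\<bar> \<le> (\<integral>w. \<bar>Phi (r * x + sqrt (1 - r\<^sup>2) * w)\<bar> \<partial>std_normal_distribution)"
    unfolding psi_def by (rule integral_abs_bound)
  also have "\<dots> \<le> (\<integral>w. 1 \<partial>std_normal_distribution)"
    by (intro Bochner_Integration.integral_mono N.integrable_const_bound[where B=1]) (auto simp: Phi_abs)
  finally show ?thesis by (simp add: N_UNIV)
qed

lemma AE_lborel_exists:
  fixes a :: real
  assumes "AE x in lborel. P x"
  shows "\<exists>x. a \<le> x \<and> x \<le> a + 1 \<and> P x"
proof (rule ccontr)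
  assume "\<not> ?thesis"
  then have sub: "{a..a+1} \<subseteq> {x \<in> space lborel. \<not> P x}" by auto
  from assms obtain N where N: "{x \<in> space lborel. \<not> P x} \<subseteq> N" "emeasure lborel N = 0" "N \<in> sets lborel"
    by (auto elim!: AE_E)
  have "emeasure lborel {a..a+1} \<le> emeasure lborel N"
    using sub N by (intro emeasure_mono) auto
  then show False using N emeasure_lborel_Icc[of a "a+1"] by simp
qed

lemma AE_N_to_lborel:
  assumes "AE x in std_normal_distribution. P x"
  shows "AE x in lborel. P x"
proof -
  have "AE x in lborel. 0 < std_normal_density x \<longrightarrow> P x"
    using assms by (subst (asm) AE_density) auto
  then show ?thesis
    by (rule AE_mp) (auto intro!: AE_I2 normal_density_pos)
qed

lemma zero_from_AE_lim:
  fixes F :: "real \<Rightarrow> real"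
  assumes ae: "AE x in lborel. F x = 0"
    and top: "\<And>xs. filterlim xs at_top sequentially \<Longrightarrow> (\<lambda>n. F (xs n)) \<longlonglongrightarrow> l1"
    and bot: "\<And>xs. filterlim xs at_bot sequentially \<Longrightarrow> (\<lambda>n. F (xs n)) \<longlonglongrightarrow> l2"
  shows "l1 = 0 \<and> l2 = 0"
proof -
  have "\<forall>n::nat. \<exists>x. real n \<le> x \<and> x \<le> real n + 1 \<and> F x = 0"
  proof
    fix n :: nat
    show "\<exists>x. real n \<le> x \<and> x \<le> real n + 1 \<and> F x = 0"
      using AE_lborel_exists[OF ae, of "real n"] by auto
  qed
  from choice[OF this] obtain xs where xs0: "\<forall>n. real n \<le> xs n \<and> xs n \<le> real n + 1 \<and> F (xs n) = 0"
    by blast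
  note xs = xs0[rule_format]
  have "\<forall>n::nat. \<exists>x. - real n - 1 \<le> x \<and> x \<le> - real n \<and> F x = 0"
  proof
    fix n :: nat
    show "\<exists>x. - real n - 1 \<le> x \<and> x \<le> - real n \<and> F x = 0"
      using AE_lborel_exists[OF ae, of "- real n - 1"] by auto
  qed
  from choice[OF this] obtain ys where ys0: "\<forall>n. - real n - 1 \<le> ys n \<and> ys n \<le> - real n \<and> F (ys n) = 0"
    by blast
  note ys = ys0[rule_format]
  have xt: "filterlim xs at_top sequentially"
    by (rule filterlim_at_top_mono[OF filterlim_real_sequentially]) (use xs in auto)
  have "filterlim (\<lambda>n. - ys n) at_top sequentially"
    by (rule filterlim_at_top_mono[OF filterlim_real_sequentially]) (rule always_eventually, use ys in \<open>smt (verit)\<close>)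
  then have yb: "filterlim ys at_bot sequentially"
    by (simp add: filterlim_uminus_at_bot)
  have "(\<lambda>n. F (xs n)) \<longlonglongrightarrow> l1" by (rule top[OF xt])
  moreover have "(\<lambda>n. F (xs n)) = (\<lambda>n. 0)" using xs by (simp add: fun_eq_iff)
  ultimately have "(\<lambda>n. 0) \<longlonglongrightarrow> l1" by simp
  then have 1: "l1 = 0" by (rule LIMSEQ_unique[OF tendsto_const, symmetric])
  have "(\<lambda>n. F (ys n)) \<longlonglongrightarrow> l2" by (rule bot[OF yb])
  moreover have "(\<lambda>n. F (ys n)) = (\<lambda>n. 0)" using ys by (simp add: fun_eq_iff)
  ultimately have "(\<lambda>n. 0) \<longlonglongrightarrow> l2" by simp
  then have 2: "l2 = 0" by (rule LIMSEQ_unique[OF tendsto_const, symmetric])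
  from 1 2 show ?thesis by simp
qed

lemma cond_lemma:
  fixes M :: "'a measure" and X Y Z :: "'a \<Rightarrow> real"
  assumes M: "prob_space M" and r1: "r1\<^sup>2 \<le> 1" and r2: "r2\<^sup>2 \<le> 1"
    and HY: "\<And>a b. (a\<^sup>2 + 2*a*b*r1 + b\<^sup>2 = 0 \<longrightarrow> (AE \<omega> in M. a * X \<omega> + b * Y \<omega> = 0)) \<and>
       (a\<^sup>2 + 2*a*b*r1 + b\<^sup>2 \<noteq> 0 \<longrightarrow> distributed M lborel (\<lambda>\<omega>. a * X \<omega> + b * Y \<omega>)
           (normal_density 0 (sqrt (a\<^sup>2 + 2*a*b*r1 + b\<^sup>2))))"
    and HZ: "\<And>a b. (a\<^sup>2 + 2*a*b*r2 + b\<^sup>2 = 0 \<longrightarrow> (AE \<omega> in M. a * X \<omega> + b * Z \<omega> = 0)) \<and>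
       (a\<^sup>2 + 2*a*b*r2 + b\<^sup>2 \<noteq> 0 \<longrightarrow> distributed M lborel (\<lambda>\<omega>. a * X \<omega> + b * Z \<omega>)
           (normal_density 0 (sqrt (a\<^sup>2 + 2*a*b*r2 + b\<^sup>2))))"
    and G: "AE \<omega> in M. Phi (X \<omega>) + Phi (Y \<omega>) + Phi (Z \<omega>) = c"
  shows "(r1 = 0) \<noteq> (r2 = 0)"
proof -
  interpret M: prob_space M by fact
  have hX: "distributed M lborel X std_normal_density"
    using HY[of 1 0] by simp
  have hY: "distributed M lborel Y std_normal_density"
    using HY[of 0 1] by simp
  have hZ: "distributed M lborel Z std_normal_density"
    using HZ[of 0 1] by simp
  have Xm[measurable]: "X \<in> borel_measurable M"
    using distributed_measurable[OF hX] by simp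
  have Ym[measurable]: "Y \<in> borel_measurable M"
    using distributed_measurable[OF hY] by simp
  have Zm[measurable]: "Z \<in> borel_measurable M"
    using distributed_measurable[OF hZ] by simp
  define F where "F = (\<lambda>x. Phi x + psi r1 x + psi r2 x - c)"
  have Fm[measurable]: "F \<in> borel_measurable borel" unfolding F_def by measurable
  have key: "(\<integral>x. indicator B x * F x \<partial>std_normal_distribution) = 0" if B[measurable]: "B \<in> sets borel" for B
  proof -
    have bnd: "\<And>g :: 'a \<Rightarrow> real. g \<in> borel_measurable M \<Longrightarrow> (\<And>\<omega>. \<bar>g \<omega>\<bar> \<le> 1) \<Longrightarrow>
        integrable M (\<lambda>\<omega>. indicator B (X \<omega>) * g \<omega>)"
      by (rule M.integrable_const_bound[where B=1]) (auto simp: indicator_def)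
    have bndN: "\<And>g :: real \<Rightarrow> real. g \<in> borel_measurable borel \<Longrightarrow> (\<And>x. \<bar>g x\<bar> \<le> 1) \<Longrightarrow>
        integrable std_normal_distribution (\<lambda>x. indicator B x * g x)"
      by (rule N.integrable_const_bound[where B=1]) (auto simp: indicator_def)
    have bndc: "integrable M (\<lambda>\<omega>. indicator B (X \<omega>) * c)"
      by (rule M.integrable_const_bound[where B="\<bar>c\<bar>"]) (auto simp: indicator_def)
    have bndcN: "integrable std_normal_distribution (\<lambda>x. indicator B x * c)"
      by (rule N.integrable_const_bound[where B="\<bar>c\<bar>"]) (auto simp: indicator_def)
    have iX: "integrable M (\<lambda>\<omega>. indicator B (X \<omega>) * Phi (X \<omega>))" by (rule bnd) (auto simp: Phi_abs)
    have iY: "integrable M (\<lambda>\<omega>. indicator B (X \<omega>) * Phi (Y \<omega>))" by (rule bnd) (auto simp: Phi_abs)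
    have iZ: "integrable M (\<lambda>\<omega>. indicator B (X \<omega>) * Phi (Z \<omega>))" by (rule bnd) (auto simp: Phi_abs)
    have jX: "integrable std_normal_distribution (\<lambda>x. indicator B x * Phi x)" by (rule bndN) (auto simp: Phi_abs)
    have j1: "integrable std_normal_distribution (\<lambda>x. indicator B x * psi r1 x)" by (rule bndN) (auto simp: psi_abs)
    have j2: "integrable std_normal_distribution (\<lambda>x. indicator B x * psi r2 x)" by (rule bndN) (auto simp: psi_abs)
    have E0: "(\<integral>\<omega>. indicator B (X \<omega>) * Phi (X \<omega>) + indicator B (X \<omega>) * Phi (Y \<omega>) +
               indicator B (X \<omega>) * Phi (Z \<omega>) - indicator B (X \<omega>) * c \<partial>M) = 0"
    proof -
      have "(\<integral>\<omega>. indicator B (X \<omega>) * Phi (X \<omega>) + indicator B (X \<omega>) * Phi (Y \<omega>) +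
               indicator B (X \<omega>) * Phi (Z \<omega>) - indicator B (X \<omega>) * c \<partial>M) = (\<integral>\<omega>. 0 \<partial>M)"
      proof (rule integral_cong_AE)
        show "AE \<omega> in M. indicator B (X \<omega>) * Phi (X \<omega>) + indicator B (X \<omega>) * Phi (Y \<omega>) +
               indicator B (X \<omega>) * Phi (Z \<omega>) - indicator B (X \<omega>) * c = 0"
          using G
        proof eventually_elim
          case (elim \<omega>)
          have "indicator B (X \<omega>) * Phi (X \<omega>) + indicator B (X \<omega>) * Phi (Y \<omega>) +
               indicator B (X \<omega>) * Phi (Z \<omega>) - indicator B (X \<omega>) * c =
               indicator B (X \<omega>) * (Phi (X \<omega>) + Phi (Y \<omega>) + Phi (Z \<omega>) - c)"
            by (simp add: algebra_simps)
          with elim show ?case by simp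
        qed
      qed auto
      then show ?thesis by simp
    qed
    have E1: "(\<integral>\<omega>. indicator B (X \<omega>) * Phi (Y \<omega>) \<partial>M) = (\<integral>x. indicator B x * psi r1 x \<partial>std_normal_distribution)"
      by (rule pair_cond[OF M r1 HY B])
    have E2: "(\<integral>\<omega>. indicator B (X \<omega>) * Phi (Z \<omega>) \<partial>M) = (\<integral>x. indicator B x * psi r2 x \<partial>std_normal_distribution)"
      by (rule pair_cond[OF M r2 HZ B])
    have E3: "(\<integral>\<omega>. indicator B (X \<omega>) * Phi (X \<omega>) \<partial>M) = (\<integral>x. indicator B x * Phi x \<partial>std_normal_distribution)"
      by (rule integral_std_normal_fun[OF hX]) measurable
    have E4: "(\<integral>\<omega>. indicator B (X \<omega>) * c \<partial>M) = (\<integral>x. indicator B x * c \<partial>std_normal_distribution)"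
      by (rule integral_std_normal_fun[OF hX]) measurable
    have "(\<integral>x. indicator B x * F x \<partial>std_normal_distribution) =
       (\<integral>x. indicator B x * Phi x + indicator B x * psi r1 x + indicator B x * psi r2 x - indicator B x * c \<partial>std_normal_distribution)"
      unfolding F_def by (simp add: algebra_simps)
    also have "\<dots> = (\<integral>x. indicator B x * Phi x \<partial>std_normal_distribution) + (\<integral>x. indicator B x * psi r1 x \<partial>std_normal_distribution)
        + (\<integral>x. indicator B x * psi r2 x \<partial>std_normal_distribution) - (\<integral>x. indicator B x * c \<partial>std_normal_distribution)"
      using jX j1 j2 bndcN by (simp add: Bochner_Integration.integral_add Bochner_Integration.integral_diff)
    also have "\<dots> = (\<integral>\<omega>. indicator B (X \<omega>) * Phi (X \<omega>) + indicator B (X \<omega>) * Phi (Y \<omega>) +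
               indicator B (X \<omega>) * Phi (Z \<omega>) - indicator B (X \<omega>) * c \<partial>M)"
      using iX iY iZ bndc unfolding E1[symmetric] E2[symmetric] E3[symmetric] E4[symmetric]
      by (simp add: Bochner_Integration.integral_add Bochner_Integration.integral_diff)
    also have "\<dots> = 0" by (rule E0)
    finally show ?thesis .
  qed
  have aeF: "AE x in std_normal_distribution. F x = 0"
  proof -
    have Fb: "\<And>x. \<bar>F x\<bar> \<le> 3 + \<bar>c\<bar>"
    proof -
      fix x
      show "\<bar>F x\<bar> \<le> 3 + \<bar>c\<bar>"
        using Phi_abs[of x] psi_abs[of r1 x] psi_abs[of r2 x] unfolding F_def abs_le_iff by linarith
    qed
    have intF: "\<And>B. B \<in> sets borel \<Longrightarrow> integrable std_normal_distribution (\<lambda>x. indicator B x * F x)"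
      by (rule N.integrable_const_bound[where B="3 + \<bar>c\<bar>"]) (auto simp: indicator_def Fb)
    have B1: "{x. F x > 0} \<in> sets borel" by measurable
    have B2: "{x. F x < 0} \<in> sets borel" by measurable
    have "AE x in std_normal_distribution. indicator {x. F x > 0} x * F x = 0"
      using key[OF B1] intF[OF B1]
      by (subst (asm) integral_nonneg_eq_0_iff_AE) (auto simp: indicator_def intro!: AE_I2)
    moreover have "AE x in std_normal_distribution. indicator {x. F x < 0} x * (- F x) = 0"
    proof -
      have "(\<integral>x. indicator {x. F x < 0} x * (- F x) \<partial>std_normal_distribution) = 0"
        using key[OF B2] by simp
      then show ?thesis using intF[OF B2]
        by (subst (asm) integral_nonneg_eq_0_iff_AE) (auto simp: indicator_def intro!: AE_I2)
    qed
    ultimately show ?thesis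
      by eventually_elim (auto simp: indicator_def split: if_splits)
  qed
  then have aeL: "AE x in lborel. F x = 0" by (rule AE_N_to_lborel)
  have lims: "1 + Lp r1 + Lp r2 - c = 0 \<and> 0 + Lm r1 + Lm r2 - c = 0"
  proof (rule zero_from_AE_lim[OF aeL])
    fix xs :: "nat \<Rightarrow> real" assume xs: "filterlim xs at_top sequentially"
    have "(\<lambda>n. Phi (xs n)) \<longlonglongrightarrow> 1" by (rule filterlim_compose[OF Phi_at_top xs])
    then show "(\<lambda>n. F (xs n)) \<longlonglongrightarrow> 1 + Lp r1 + Lp r2 - c"
      unfolding F_def by (intro tendsto_intros psi_top xs)
  next
    fix xs :: "nat \<Rightarrow> real" assume xs: "filterlim xs at_bot sequentially"
    have "(\<lambda>n. Phi (xs n)) \<longlonglongrightarrow> 0" by (rule filterlim_compose[OF Phi_at_bot xs])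
    then show "(\<lambda>n. F (xs n)) \<longlonglongrightarrow> 0 + Lm r1 + Lm r2 - c"
      unfolding F_def by (intro tendsto_intros psi_bot xs)
  qed
  then show ?thesis
    unfolding Lp_def Lm_def by (auto split: if_splits)
qed

lemma sum_two_delta:
  fixes f :: "nat \<Rightarrow> real"
  assumes "i < n" "j < n" "i \<noteq> j"
  shows "(\<Sum>k<n. (if k = i then a else if k = j then b else 0) * f k) = a * f i + b * f j"
proof -
  have "(\<Sum>k<n. (if k = i then a else if k = j then b else 0) * f k) =
        (\<Sum>k<n. (if k = i then a * f i else 0) + (if k = j then b * f j else 0))"
    using assms(3) by (intro sum.cong) auto
  also have "\<dots> = a * f i + b * f j"
    using assms by (simp add: sum.distrib)
  finally show ?thesis .
qed

lemma quad_two: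
  fixes R :: "nat \<Rightarrow> nat \<Rightarrow> real" and a b :: real
  assumes "i < n" "j < n" "i \<noteq> j" "R i i = 1" "R j j = 1" "R j i = R i j"
  defines "c \<equiv> (\<lambda>k. if k = i then a else if k = j then b else 0)"
  shows "(\<Sum>k<n. \<Sum>l<n. c k * R k l * c l) = a\<^sup>2 + 2*a*b*R i j + b\<^sup>2"
proof -
  have inner: "\<And>k. (\<Sum>l<n. c k * R k l * c l) = c k * (a * R k i + b * R k j)"
  proof -
    fix k
    have "(\<Sum>l<n. c k * R k l * c l) = (\<Sum>l<n. c l * (c k * R k l))"
      by (simp add: algebra_simps)
    also have "\<dots> = a * (c k * R k i) + b * (c k * R k j)"
      unfolding c_def by (rule sum_two_delta[OF assms(1-3)])
    finally show "(\<Sum>l<n. c k * R k l * c l) = c k * (a * R k i + b * R k j)"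
      by (simp add: algebra_simps)
  qed
  have "(\<Sum>k<n. \<Sum>l<n. c k * R k l * c l) = (\<Sum>k<n. c k * (a * R k i + b * R k j))"
    by (simp add: inner)
  also have "\<dots> = a * (a * R i i + b * R i j) + b * (a * R j i + b * R j j)"
    unfolding c_def by (rule sum_two_delta[OF assms(1-3)])
  also have "\<dots> = a\<^sup>2 + 2*a*b*R i j + b\<^sup>2"
    using assms(4-6) by (simp add: power2_eq_square algebra_simps)
  finally show ?thesis .
qed

lemma gv_pair:
  assumes gv: "gaussian_vector M n X R" and R: "R \<in> corr_matrices n"
    and ij: "i < n" "j < n" "i \<noteq> j"
  shows "(a\<^sup>2 + 2*a*b*R i j + b\<^sup>2 = 0 \<longrightarrow> (AE \<omega> in M. a * X i \<omega> + b * X j \<omega> = 0)) \<and>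
       (a\<^sup>2 + 2*a*b*R i j + b\<^sup>2 \<noteq> 0 \<longrightarrow> distributed M lborel (\<lambda>\<omega>. a * X i \<omega> + b * X j \<omega>)
           (normal_density 0 (sqrt (a\<^sup>2 + 2*a*b*R i j + b\<^sup>2))))"
    and "0 \<le> a\<^sup>2 + 2*a*b*R i j + b\<^sup>2"
proof -
  define c where "c = (\<lambda>k. if k = i then a else if k = j then b else 0)"
  have Rii: "R i i = 1" "R j j = 1" and Rs: "R j i = R i j"
    using R ij unfolding corr_matrices_def by auto
  have Q: "(\<Sum>k<n. \<Sum>l<n. c k * R k l * c l) = a\<^sup>2 + 2*a*b*R i j + b\<^sup>2"
    unfolding c_def by (rule quad_two[OF ij Rii Rs])
  have L: "(\<lambda>\<omega>. \<Sum>k<n. c k * X k \<omega>) = (\<lambda>\<omega>. a * X i \<omega> + b * X j \<omega>)"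
    unfolding c_def by (rule ext) (rule sum_two_delta[OF ij])
  from gv have "let v = (\<Sum>k<n. \<Sum>l<n. c k * R k l * c l); Y = (\<lambda>\<omega>. \<Sum>k<n. c k * X k \<omega>)
        in if v = 0 then (AE \<omega> in M. Y \<omega> = 0) else distributed M lborel Y (normal_density 0 (sqrt v))"
    unfolding gaussian_vector_def by blast
  then show "(a\<^sup>2 + 2*a*b*R i j + b\<^sup>2 = 0 \<longrightarrow> (AE \<omega> in M. a * X i \<omega> + b * X j \<omega> = 0)) \<and>
       (a\<^sup>2 + 2*a*b*R i j + b\<^sup>2 \<noteq> 0 \<longrightarrow> distributed M lborel (\<lambda>\<omega>. a * X i \<omega> + b * X j \<omega>)
           (normal_density 0 (sqrt (a\<^sup>2 + 2*a*b*R i j + b\<^sup>2))))"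
    unfolding Q L Let_def by (auto split: if_splits)
  from R have "0 \<le> (\<Sum>k<n. \<Sum>l<n. c k * R k l * c l)"
    unfolding corr_matrices_def by blast
  then show "0 \<le> a\<^sup>2 + 2*a*b*R i j + b\<^sup>2" unfolding Q .
qed

lemma corr_r2:
  assumes R: "R \<in> corr_matrices n" and ij: "i < n" "j < n" "i \<noteq> j"
  shows "(R i j)\<^sup>2 \<le> 1"
proof -
  define c where "c = (\<lambda>k. if k = i then R i j else if k = j then -1 else 0)"
  have Rii: "R i i = 1" "R j j = 1" and Rs: "R j i = R i j"
    using R ij unfolding corr_matrices_def by auto
  have Q: "(\<Sum>k<n. \<Sum>l<n. c k * R k l * c l) = (R i j)\<^sup>2 + 2*(R i j)*(-1)*R i j + (-1)\<^sup>2"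
    unfolding c_def by (rule quad_two[OF ij Rii Rs])
  from R have "0 \<le> (\<Sum>k<n. \<Sum>l<n. c k * R k l * c l)"
    unfolding corr_matrices_def by blast
  then show ?thesis unfolding Q by (simp add: power2_eq_square)
qed

definition mN :: real where "mN = (\<integral>x. Phi x \<partial>std_normal_distribution)"
definition vN :: real where "vN = (\<integral>x. (Phi x - mN) * (Phi x - mN) \<partial>std_normal_distribution)"

lemma mN_bounds: "0 \<le> mN" "mN \<le> 1"
proof -
  have "mN \<le> (\<integral>x. 1 \<partial>std_normal_distribution)"
    unfolding mN_def by (intro Bochner_Integration.integral_mono N.integrable_const_bound[where B=1]) (auto simp: Phi_abs Phi_le1)
  then show "mN \<le> 1" by (simp add: N_UNIV)
  show "0 \<le> mN" unfolding mN_def by (intro Bochner_Integration.integral_nonneg) (auto simp: Phi_nonneg)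
qed

lemma Dbound: "\<bar>Phi x - mN\<bar> \<le> 1"
  using Phi_nonneg[of x] Phi_le1[of x] mN_bounds by (simp add: abs_le_iff)

lemma Dsq: "\<bar>(Phi x - mN) * (Phi x - mN)\<bar> \<le> 1"
proof -
  have "\<bar>Phi x - mN\<bar> * \<bar>Phi x - mN\<bar> \<le> 1"
    by (rule mult_le_one) (auto simp: Dbound)
  then show ?thesis by (simp add: abs_mult)
qed

lemma vN_pos: "vN > 0"
proof -
  have int: "integrable std_normal_distribution (\<lambda>x. (Phi x - mN) * (Phi x - mN))"
    by (rule N.integrable_const_bound[where B=1])
       (auto intro!: AE_I2 simp: Dsq[unfolded abs_le_iff])
  have nn: "0 \<le> vN" unfolding vN_def by (intro Bochner_Integration.integral_nonneg) auto
  show ?thesis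
  proof (rule ccontr)
    assume "\<not> vN > 0"
    then have "vN = 0" using nn by simp
    then have "AE x in std_normal_distribution. (Phi x - mN) * (Phi x - mN) = 0"
      using int unfolding vN_def by (subst (asm) integral_nonneg_eq_0_iff_AE) auto
    then have "AE x in std_normal_distribution. Phi x - mN = 0" by simp
    then have ae: "AE x in lborel. Phi x - mN = 0" by (rule AE_N_to_lborel)
    have "1 - mN = 0 \<and> 0 - mN = 0"
    proof (rule zero_from_AE_lim[OF ae])
      fix xs :: "nat \<Rightarrow> real" assume xs: "filterlim xs at_top sequentially"
      show "(\<lambda>n. Phi (xs n) - mN) \<longlonglongrightarrow> 1 - mN"
        by (intro tendsto_intros filterlim_compose[OF Phi_at_top xs])
    next
      fix xs :: "nat \<Rightarrow> real" assume xs: "filterlim xs at_bot sequentially"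
      show "(\<lambda>n. Phi (xs n) - mN) \<longlonglongrightarrow> 0 - mN"
        by (intro tendsto_intros filterlim_compose[OF Phi_at_bot xs])
    qed
    then show False by linarith
  qed
qed

lemma mean_U:
  assumes "distributed M lborel X std_normal_density"
  shows "(\<integral>\<omega>. Phi (X \<omega>) \<partial>M) = mN"
  unfolding mN_def by (rule integral_std_normal_fun[OF assms]) measurable

lemma covar_U:
  assumes "distributed M lborel X std_normal_density"
  shows "covar M (\<lambda>\<omega>. Phi (X \<omega>)) (\<lambda>\<omega>. Phi (X \<omega>)) = vN"
  unfolding covar_def mean_U[OF assms] vN_def
  by (rule integral_std_normal_fun[OF assms]) measurable

lemma integral_sq_sum:
  fixes M :: "'a measure" and D :: "nat \<Rightarrow> 'a \<Rightarrow> real"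
  assumes M: "prob_space M" and I: "finite I"
    and Dm: "\<And>i. i \<in> I \<Longrightarrow> D i \<in> borel_measurable M"
    and Db: "\<And>i \<omega>. i \<in> I \<Longrightarrow> \<bar>D i \<omega>\<bar> \<le> K"
  shows "(\<integral>\<omega>. (\<Sum>i\<in>I. y i * D i \<omega>)\<^sup>2 \<partial>M) =
         (\<Sum>i\<in>I. \<Sum>j\<in>I. y i * y j * (\<integral>\<omega>. D i \<omega> * D j \<omega> \<partial>M))"
proof -
  interpret M: prob_space M by fact
  have intij: "integrable M (\<lambda>\<omega>. D i \<omega> * D j \<omega>)" if "i \<in> I" "j \<in> I" for i j
  proof (rule M.integrable_const_bound[where B="K * K"])
    show "AE \<omega> in M. norm (D i \<omega> * D j \<omega>) \<le> K * K"
      using Db[OF that(1)] Db[OF that(2)]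
      by (intro AE_I2) (auto simp: abs_mult intro!: mult_mono order_trans[OF abs_ge_zero])
    show "(\<lambda>\<omega>. D i \<omega> * D j \<omega>) \<in> borel_measurable M"
      using Dm[OF that(1)] Dm[OF that(2)] by measurable
  qed
  have "(\<lambda>\<omega>. (\<Sum>i\<in>I. y i * D i \<omega>)\<^sup>2) = (\<lambda>\<omega>. \<Sum>i\<in>I. \<Sum>j\<in>I. y i * y j * (D i \<omega> * D j \<omega>))"
    by (rule ext) (simp add: power2_eq_square sum_product algebra_simps)
  then have "(\<integral>\<omega>. (\<Sum>i\<in>I. y i * D i \<omega>)\<^sup>2 \<partial>M) =
      (\<integral>\<omega>. (\<Sum>i\<in>I. \<Sum>j\<in>I. y i * y j * (D i \<omega> * D j \<omega>)) \<partial>M)" by simp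
  also have "\<dots> = (\<Sum>i\<in>I. (\<integral>\<omega>. (\<Sum>j\<in>I. y i * y j * (D i \<omega> * D j \<omega>)) \<partial>M))"
    by (rule Bochner_Integration.integral_sum) (auto intro!: intij)
  also have "\<dots> = (\<Sum>i\<in>I. \<Sum>j\<in>I. (\<integral>\<omega>. y i * y j * (D i \<omega> * D j \<omega>) \<partial>M))"
    by (intro sum.cong refl Bochner_Integration.integral_sum) (auto intro!: intij)
  also have "\<dots> = (\<Sum>i\<in>I. \<Sum>j\<in>I. y i * y j * (\<integral>\<omega>. D i \<omega> * D j \<omega> \<partial>M))"
    by (simp add: integral_mult_right_zero)
  finally show ?thesis .
qed

lemma block_in_corr:
  assumes n: "n \<ge> 3"
  shows "block_matrix n \<in> corr_matrices n"
proof -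
  have psd: "0 \<le> (\<Sum>i<n. \<Sum>j<n. x i * block_matrix n i j * x j)" for x :: "nat \<Rightarrow> real"
  proof -
    define S where "S = x 0 + x 1 + x 2"
    define a where "a = (\<lambda>i::nat. if i < 3 then 1 else (0::real))"
    have sumA: "(\<Sum>j<n. a j * x j) = S"
    proof -
      have "(\<Sum>j<n. a j * x j) = (\<Sum>j\<in>{..<n}. if j \<in> {..<3} then x j else 0)"
        unfolding a_def by (intro sum.cong) auto
      also have "\<dots> = (\<Sum>j\<in>{..<n} \<inter> {..<3}. x j)"
        by (simp add: sum.inter_restrict)
      also have "{..<n} \<inter> {..<(3::nat)} = {..<3}" using n by auto
      also have "(\<Sum>j<(3::nat). x j) = S" unfolding S_def by (simp add: numeral_3_eq_3 numeral_2_eq_2)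
      finally show ?thesis .
    qed
    have row: "(\<Sum>j<n. x i * block_matrix n i j * x j) = x i * (x i - a i * S / 2 + a i * x i / 2)"
      if i: "i < n" for i
    proof -
      have "(\<Sum>j<n. x i * block_matrix n i j * x j) =
            (\<Sum>j<n. (if j = i then x i * (x i + a i * x i / 2) else 0) - x i * (a i / 2) * (a j * x j))"
        using i by (intro sum.cong) (auto simp: block_matrix_def a_def algebra_simps)
      also have "\<dots> = x i * (x i + a i * x i / 2) - x i * (a i / 2) * (\<Sum>j<n. a j * x j)"
        using i by (simp add: sum_subtractf sum_distrib_left)
      also have "\<dots> = x i * (x i - a i * S / 2 + a i * x i / 2)"
        by (simp add: sumA algebra_simps)
      finally show ?thesis .
    qed
    have "(\<Sum>i<n. \<Sum>j<n. x i * block_matrix n i j * x j) = (\<Sum>i<n. x i * (x i - a i * S / 2 + a i * x i / 2))"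
      by (intro sum.cong refl row) simp
    also have "\<dots> = (\<Sum>i<n. (x i)\<^sup>2) - S / 2 * (\<Sum>i<n. a i * x i) + (\<Sum>i<n. a i * (x i)\<^sup>2) / 2"
      by (simp add: algebra_simps power2_eq_square sum.distrib sum_subtractf sum_distrib_left sum_divide_distrib)
    also have "(\<Sum>i<n. a i * x i) = S" by (rule sumA)
    also have "(\<Sum>i<n. a i * (x i)\<^sup>2) = (x 0)\<^sup>2 + (x 1)\<^sup>2 + (x 2)\<^sup>2"
    proof -
      have "(\<Sum>i<n. a i * (x i)\<^sup>2) = (\<Sum>j\<in>{..<n}. if j \<in> {..<3} then (x j)\<^sup>2 else 0)"
        unfolding a_def by (intro sum.cong) auto
      also have "\<dots> = (\<Sum>j\<in>{..<n} \<inter> {..<3}. (x j)\<^sup>2)"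
        by (simp add: sum.inter_restrict)
      also have "{..<n} \<inter> {..<(3::nat)} = {..<3}" using n by auto
      finally show ?thesis by (simp add: numeral_3_eq_3 numeral_2_eq_2)
    qed
    also have "(\<Sum>i<n. (x i)\<^sup>2) \<ge> (\<Sum>i<(3::nat). (x i)\<^sup>2)"
      using n by (intro sum_mono2) auto
    then have "(\<Sum>i<n. (x i)\<^sup>2) \<ge> (x 0)\<^sup>2 + (x 1)\<^sup>2 + (x 2)\<^sup>2"
      by (simp add: numeral_3_eq_3 numeral_2_eq_2)
    then have "0 \<le> (\<Sum>i<n. (x i)\<^sup>2) - S / 2 * S + ((x 0)\<^sup>2 + (x 1)\<^sup>2 + (x 2)\<^sup>2) / 2"
    proof -
      have id: "3 * ((x 0)\<^sup>2 + (x 1)\<^sup>2 + (x 2)\<^sup>2) - S * S = (x 0 - x 1)\<^sup>2 + (x 0 - x 2)\<^sup>2 + (x 1 - x 2)\<^sup>2"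
        unfolding S_def by (simp add: power2_eq_square algebra_simps)
      have "0 \<le> (x 0 - x 1)\<^sup>2 + (x 0 - x 2)\<^sup>2 + (x 1 - x 2)\<^sup>2" by simp
      then have h3: "0 \<le> 3 * ((x 0)\<^sup>2 + (x 1)\<^sup>2 + (x 2)\<^sup>2) - S * S" using id by simp
      have aux: "\<And>Q Q3 SS :: real. Q3 \<le> Q \<Longrightarrow> 0 \<le> 3 * Q3 - SS \<Longrightarrow> 0 \<le> Q - SS / 2 + Q3 / 2"
        by linarith
      have "S / 2 * S = (S * S) / 2" by simp
      then show ?thesis using aux[OF \<open>(\<Sum>i<n. (x i)\<^sup>2) \<ge> (x 0)\<^sup>2 + (x 1)\<^sup>2 + (x 2)\<^sup>2\<close> h3] by simp
    qed
    finally show ?thesis .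
  qed
  show ?thesis
    unfolding corr_matrices_def using psd
    by (auto simp: block_matrix_def)
qed

lemma gv_single:
  assumes gv: "gaussian_vector M n X R" and R: "R \<in> corr_matrices n" and n: "n \<ge> 2" and i: "i < n"
  shows "distributed M lborel (X i) std_normal_density"
proof -
  define j where "j = (if i = 0 then 1 else (0::nat))"
  have j: "j < n" "i \<noteq> j" unfolding j_def using n i by auto
  have "distributed M lborel (\<lambda>\<omega>. 1 * X i \<omega> + 0 * X j \<omega>) (normal_density 0 (sqrt (1\<^sup>2 + 2*1*0*R i j + 0\<^sup>2)))"
    using gv_pair(1)[OF gv R i j(1) j(2), of 1 0] by simp
  then show ?thesis by simp
qed

lemma correl_setup:
  fixes M :: "'a measure"
  assumes M: "prob_space M" and gv: "gaussian_vector M n X R" and R: "R \<in> corr_matrices n" and n: "n \<ge> 2"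
    and i: "i < n" and j: "j < n"
  shows "covar M (\<lambda>\<omega>. Phi (X i \<omega>)) (\<lambda>\<omega>. Phi (X j \<omega>)) = (\<integral>\<omega>. (Phi (X i \<omega>) - mN) * (Phi (X j \<omega>) - mN) \<partial>M)"
    and "correl M (\<lambda>\<omega>. Phi (X i \<omega>)) (\<lambda>\<omega>. Phi (X j \<omega>)) =
           covar M (\<lambda>\<omega>. Phi (X i \<omega>)) (\<lambda>\<omega>. Phi (X j \<omega>)) / vN"
proof -
  have di: "distributed M lborel (X i) std_normal_density" by (rule gv_single[OF gv R n i])
  have dj: "distributed M lborel (X j) std_normal_density" by (rule gv_single[OF gv R n j])
  show "covar M (\<lambda>\<omega>. Phi (X i \<omega>)) (\<lambda>\<omega>. Phi (X j \<omega>)) = (\<integral>\<omega>. (Phi (X i \<omega>) - mN) * (Phi (X j \<omega>) - mN) \<partial>M)"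
    unfolding covar_def mean_U[OF di] mean_U[OF dj] ..
  have "sqrt (covar M (\<lambda>\<omega>. Phi (X i \<omega>)) (\<lambda>\<omega>. Phi (X i \<omega>)) * covar M (\<lambda>\<omega>. Phi (X j \<omega>)) (\<lambda>\<omega>. Phi (X j \<omega>))) = vN"
    unfolding covar_U[OF di] covar_U[OF dj] using vN_pos by simp
  then show "correl M (\<lambda>\<omega>. Phi (X i \<omega>)) (\<lambda>\<omega>. Phi (X j \<omega>)) =
           covar M (\<lambda>\<omega>. Phi (X i \<omega>)) (\<lambda>\<omega>. Phi (X j \<omega>)) / vN"
    unfolding correl_def by simp
qed

lemma Rstar_sub:
  assumes n: "n \<ge> 3"
  shows "Rstar_set TYPE('a) n \<subseteq> corr_matrices n"
proof
  fix S assume "S \<in> Rstar_set TYPE('a) n"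
  then obtain M :: "'a measure" and X R where M: "prob_space M" and R: "R \<in> corr_matrices n"
    and gv: "gaussian_vector M n X R" and S: "S = correl_matrix M n (\<lambda>i \<omega>. Phi (X i \<omega>))"
    unfolding Rstar_set_def by blast
  interpret M: prob_space M by fact
  have n2: "n \<ge> 2" using n by simp
  define c where "c = (\<lambda>i j. covar M (\<lambda>\<omega>. Phi (X i \<omega>)) (\<lambda>\<omega>. Phi (X j \<omega>)))"
  have Sij: "S i j = c i j / vN" if "i < n" "j < n" for i j
    unfolding S correl_matrix_def c_def using correl_setup(2)[OF M gv R n2 that] that by simp
  have cD: "c i j = (\<integral>\<omega>. (Phi (X i \<omega>) - mN) * (Phi (X j \<omega>) - mN) \<partial>M)" if "i < n" "j < n" for i j
    unfolding c_def using correl_setup(1)[OF M gv R n2 that] .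
  have csym: "c i j = c j i" for i j unfolding c_def covar_def by (simp add: mult.commute)
  have cii: "c i i = vN" if "i < n" for i
    unfolding c_def by (rule covar_U[OF gv_single[OF gv R n2 that]])
  have Xm: "X i \<in> borel_measurable M" if "i < n" for i
    using distributed_measurable[OF gv_single[OF gv R n2 that]] by simp
  show "S \<in> corr_matrices n"
    unfolding corr_matrices_def
  proof (intro CollectI conjI allI impI)
    fix i j assume "n \<le> i \<or> n \<le> j"
    then show "S i j = 0" unfolding S correl_matrix_def by auto
  next
    fix i j assume "i < n" "j < n"
    then show "S i j = S j i" using Sij csym by simp
  next
    fix i assume "i < n"
    then show "S i i = 1" using Sij cii vN_pos by simp
  next
    fix x :: "nat \<Rightarrow> real"
    have "(\<Sum>i<n. \<Sum>j<n. x i * S i j * x j) = (\<Sum>i<n. \<Sum>j<n. x i * x j * c i j) / vN"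
      by (simp add: Sij sum_divide_distrib algebra_simps)
    also have "(\<Sum>i<n. \<Sum>j<n. x i * x j * c i j) =
        (\<integral>\<omega>. (\<Sum>i<n. x i * (Phi (X i \<omega>) - mN))\<^sup>2 \<partial>M)"
    proof -
      have "(\<integral>\<omega>. (\<Sum>i<n. x i * (Phi (X i \<omega>) - mN))\<^sup>2 \<partial>M) =
          (\<Sum>i<n. \<Sum>j<n. x i * x j * (\<integral>\<omega>. (Phi (X i \<omega>) - mN) * (Phi (X j \<omega>) - mN) \<partial>M))"
      proof (rule integral_sq_sum[OF M, where K=1])
        fix i assume "i \<in> {..<n}"
        then have [measurable]: "X i \<in> borel_measurable M" using Xm by simp
        show "(\<lambda>\<omega>. Phi (X i \<omega>) - mN) \<in> borel_measurable M" by measurable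
      qed (auto simp: Dbound)
      then show ?thesis by (simp add: cD)
    qed
    finally show "0 \<le> (\<Sum>i<n. \<Sum>j<n. x i * S i j * x j)"
      using vN_pos by simp
  qed
qed

lemma block_notin:
  assumes n: "n \<ge> 3"
  shows "block_matrix n \<notin> Rstar_set TYPE('a) n"
proof
  assume "block_matrix n \<in> Rstar_set TYPE('a) n"
  then obtain M :: "'a measure" and X R where M: "prob_space M" and R: "R \<in> corr_matrices n"
    and gv: "gaussian_vector M n X R" and S: "block_matrix n = correl_matrix M n (\<lambda>i \<omega>. Phi (X i \<omega>))"
    unfolding Rstar_set_def by blast
  interpret M: prob_space M by fact
  have n2: "n \<ge> 2" using n by simp
  define c where "c = (\<lambda>i j. covar M (\<lambda>\<omega>. Phi (X i \<omega>)) (\<lambda>\<omega>. Phi (X j \<omega>)))"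
  have Sij: "block_matrix n i j = c i j / vN" if "i < n" "j < n" for i j
    unfolding S correl_matrix_def c_def using correl_setup(2)[OF M gv R n2 that] that by simp
  have cD: "c i j = (\<integral>\<omega>. (Phi (X i \<omega>) - mN) * (Phi (X j \<omega>) - mN) \<partial>M)" if "i < n" "j < n" for i j
    unfolding c_def using correl_setup(1)[OF M gv R n2 that] .
  have cii: "c i i = vN" if "i < n" for i
    unfolding c_def by (rule covar_U[OF gv_single[OF gv R n2 that]])
  have coff: "c i j = - vN / 2" if "i < 3" "j < 3" "i \<noteq> j" for i j
  proof -
    have "block_matrix n i j = - 1/2" using that n by (simp add: block_matrix_def)
    then have "c i j / vN = - 1/2" using Sij[of i j] that n by simp
    then show ?thesis using vN_pos by (simp add: field_simps)
  qed
  have Xm: "X i \<in> borel_measurable M" if "i < n" for i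
    using distributed_measurable[OF gv_single[OF gv R n2 that]] by simp
  define T where "T = (\<lambda>\<omega>. \<Sum>i<(3::nat). 1 * (Phi (X i \<omega>) - mN))"
  have Tm: "T \<in> borel_measurable M"
  proof -
    have [measurable]: "X i \<in> borel_measurable M" if "i < 3" for i using Xm[of i] that n by simp
    show ?thesis unfolding T_def by measurable
  qed
  have "(\<integral>\<omega>. (T \<omega>)\<^sup>2 \<partial>M) = (\<Sum>i<(3::nat). \<Sum>j<(3::nat). 1 * 1 * (\<integral>\<omega>. (Phi (X i \<omega>) - mN) * (Phi (X j \<omega>) - mN) \<partial>M))"
    unfolding T_def
  proof (rule integral_sq_sum[OF M, where K=1])
    fix i :: nat assume "i \<in> {..<3}"
    then have [measurable]: "X i \<in> borel_measurable M" using Xm n by simp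
    show "(\<lambda>\<omega>. Phi (X i \<omega>) - mN) \<in> borel_measurable M" by measurable
  qed (auto simp: Dbound)
  also have "\<dots> = (\<Sum>i<(3::nat). \<Sum>j<(3::nat). c i j)"
    using n by (intro sum.cong refl) (simp add: cD)
  also have "\<dots> = c 0 0 + c 0 1 + c 0 2 + c 1 0 + c 1 1 + c 1 2 + c 2 0 + c 2 1 + c 2 2"
    by (simp add: numeral_3_eq_3 numeral_2_eq_2)
  also have "\<dots> = 0"
    using n by (simp add: cii coff)
  finally have T0: "(\<integral>\<omega>. (T \<omega>)\<^sup>2 \<partial>M) = 0" .
  have intT: "integrable M (\<lambda>\<omega>. (T \<omega>)\<^sup>2)"
  proof (rule M.integrable_const_bound[where B=9])
    have "\<bar>T \<omega>\<bar> \<le> 3" for \<omega>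
    proof -
      have "\<bar>T \<omega>\<bar> \<le> (\<Sum>i<(3::nat). \<bar>1 * (Phi (X i \<omega>) - mN)\<bar>)"
        unfolding T_def by (rule sum_abs)
      also have "\<dots> \<le> (\<Sum>i<(3::nat). 1)"
        by (intro sum_mono) (simp add: Dbound)
      finally show ?thesis by simp
    qed
    then have "(T \<omega>)\<^sup>2 \<le> 9" for \<omega>
      using abs_le_square_iff[of "T \<omega>" 3] by (simp add: power2_eq_square)
    then show "AE \<omega> in M. norm ((T \<omega>)\<^sup>2) \<le> 9" by (intro AE_I2) simp
    show "(\<lambda>\<omega>. (T \<omega>)\<^sup>2) \<in> borel_measurable M" using Tm by measurable
  qed
  have "AE \<omega> in M. (T \<omega>)\<^sup>2 = 0"
    using T0 intT by (subst (asm) integral_nonneg_eq_0_iff_AE) auto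
  then have "AE \<omega> in M. T \<omega> = 0" by eventually_elim simp
  then have G: "AE \<omega> in M. Phi (X 0 \<omega>) + Phi (X 1 \<omega>) + Phi (X 2 \<omega>) = 3 * mN"
  proof eventually_elim
    case (elim \<omega>)
    have "T \<omega> = (Phi (X 0 \<omega>) - mN) + (Phi (X 1 \<omega>) - mN) + (Phi (X 2 \<omega>) - mN)"
      unfolding T_def by (simp add: numeral_3_eq_3 numeral_2_eq_2)
    then show ?case using elim by linarith
  qed
  have G1: "AE \<omega> in M. Phi (X 1 \<omega>) + Phi (X 0 \<omega>) + Phi (X 2 \<omega>) = 3 * mN"
    using G by eventually_elim (simp add: algebra_simps)
  have G2: "AE \<omega> in M. Phi (X 2 \<omega>) + Phi (X 0 \<omega>) + Phi (X 1 \<omega>) = 3 * mN"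
    using G by eventually_elim (simp add: algebra_simps)
  have i3: "0 < n" "1 < n" "2 < n" using n by auto
  have Rs: "R 1 0 = R 0 1" "R 2 0 = R 0 2" "R 2 1 = R 1 2"
    using R i3 unfolding corr_matrices_def by auto
  have C1: "(R 0 1 = 0) \<noteq> (R 0 2 = 0)"
    by (rule cond_lemma[OF M corr_r2[OF R i3(1) i3(2)] corr_r2[OF R i3(1) i3(3)]
          gv_pair(1)[OF gv R i3(1) i3(2)] gv_pair(1)[OF gv R i3(1) i3(3)] G]) simp_all
  have C2: "(R 1 0 = 0) \<noteq> (R 1 2 = 0)"
    by (rule cond_lemma[OF M corr_r2[OF R i3(2) i3(1)] corr_r2[OF R i3(2) i3(3)]
          gv_pair(1)[OF gv R i3(2) i3(1)] gv_pair(1)[OF gv R i3(2) i3(3)] G1]) simp_all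
  have C3: "(R 2 0 = 0) \<noteq> (R 2 1 = 0)"
    by (rule cond_lemma[OF M corr_r2[OF R i3(3) i3(1)] corr_r2[OF R i3(3) i3(2)]
          gv_pair(1)[OF gv R i3(3) i3(1)] gv_pair(1)[OF gv R i3(3) i3(2)] G2]) simp_all
  show False using C1 C2 C3 unfolding Rs by blast
qed

theorem mainTheorem8:
  fixes n :: nat
  assumes "n \<ge> 3"
  shows "Rstar_set TYPE('a) n \<subset> corr_matrices n \<and>
         block_matrix n \<in> corr_matrices n \<and>
         block_matrix n \<notin> Rstar_set TYPE('a) n"
  using Rstar_sub[OF assms] block_in_corr[OF assms] block_notin[OF assms] by blast


end
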